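(* For a nonnegative integer $q$ let $\wp(q)=\int_0^{\frac{\pi}{2}}z\sin^qz\,\mathrm{d}z$. Then for every nonnegative integer $n$, $$\wp(2n)=\frac{\binom{2n}{n}}{4^{n+1}}\left(\frac{\pi^2}{2}+\sum_{k=1}^n\frac{4^k}{k^2\binom{2k}{k}}\right),\qquad \wp(2n+1)=\frac{4^n}{(2n+1)\binom{2n}{n}}\left(1+\sum_{k=1}^n\frac{\binom{2k}{k}}{4^k(2k+1)}\right).$$ *)

theory Defs
  imports "HOL-Analysis.Analysis"
begin

definition wp :: "nat \<Rightarrow> real" where
  "wp q = integral {0..pi/2} (\<lambda>z. z * sin z ^ q)"

end

theory Submission
  imports Defs
begin

lemma cb_aux: fixes a b d n :: nat assumes "Suc n * a = Suc (2*n+1) * b" "Suc n * b = (2*n+1) * d"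
  shows "a * (n+1) = 2*(2*n+1) * d"
proof -
  have "Suc n * (a * (n+1)) = Suc n * (2*(2*n+1) * d)"
  proof -
    have "Suc n * (a * (n+1)) = (Suc n * a) * (n+1)" by (simp add: algebra_simps)
    also have "... = Suc (2*n+1) * (Suc n * b)" unfolding assms(1) by (simp add: algebra_simps)
    also have "... = Suc n * (2*(2*n+1) * d)" unfolding assms(2) by (simp add: algebra_simps)
    finally show ?thesis .
  qed
  then show ?thesis by (simp only: mult_left_cancel Suc_neq_Zero simp_thms)
qed
lemma cbn: "((2*Suc n) choose (Suc n)) * (n+1) = 2*(2*n+1) * ((2*n) choose n)"
proof -
  have A: "Suc n * (Suc (2*n+1) choose Suc n) = Suc (2*n+1) * ((2*n+1) choose n)"
    by (rule Suc_times_binomial)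
  have B: "Suc n * (Suc (2*n) choose Suc n) = Suc (2*n) * ((2*n) choose n)"
    by (rule Suc_times_binomial)
  have C: "((2*n+1) choose n) = ((2*n+1) choose (Suc n))"
    using binomial_symmetric[of n "2*n+1"] by simp
  have D: "2*Suc n = Suc (2*n+1)" "Suc (2*n) = 2*n+1" by simp_all
  show ?thesis unfolding D(1) by (rule cb_aux[OF A[unfolded C] B[unfolded D(2)]])
qed
lemma cb: "real ((2*Suc n) choose (Suc n)) * (n+1) = 2*(2*n+1) * real ((2*n) choose n)"
proof -
  have "real (((2*Suc n) choose (Suc n)) * (n+1)) = real (2*(2*n+1) * ((2*n) choose n))"
    by (simp only: cbn)
  then show ?thesis by (simp only: of_nat_mult of_nat_add of_nat_numeral of_nat_1)
qed

lemma helper: fixes a s c t z :: real assumes "c * c = 1 - s * s" shows "(a + 2) * (s * t) * c - (a + 2) * ((s * t) * c + z * ((a + 1) * t * c * c - s * t * s)) = (a + 2) * (a + 2) * (z * (s * s * t)) - (a + 2) * (a + 1) * (z * t)" using assms by algebra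

lemma rec_int:
  fixes m :: nat
  shows "((\<lambda>z. real (m+2)^2 * (z * sin z^(m+2)) - real (m+2) * real (m+1) * (z * sin z^m)) has_integral 1) {0..pi/2}"
proof -
  define F where "F z = sin z^(m+2) - real (m+2) * z * sin z^(m+1) * cos z" for z
  have d: "(F has_real_derivative (real (m+2)^2 * (z * sin z^(m+2)) - real (m+2) * real (m+1) * (z * sin z^m))) (at z within {0..pi/2})" for z
  proof -
    have "(F has_real_derivative (real (m+2) * sin z^(m+1) * cos z - real (m+2) * (sin z^(m+1) * cos z + z * (real (m+1) * sin z^m * cos z * cos z - sin z^(m+1) * sin z)))) (at z within {0..pi/2})"
      unfolding F_def apply (rule derivative_eq_intros refl | simp)+ by algebra
    moreover have "real (m+2) * sin z^(m+1) * cos z - real (m+2) * (sin z^(m+1) * cos z + z * (real (m+1) * sin z^m * cos z * cos z - sin z^(m+1) * sin z)) = real (m+2)^2 * (z * sin z^(m+2)) - real (m+2) * real (m+1) * (z * sin z^m)"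
    proof -
      have cc: "cos z * cos z = 1 - sin z * sin z" using sin_squared_eq[of z] by (simp add: power2_eq_square)
      have pw: "sin z^(m+2) = sin z * sin z * sin z^m" "sin z^(m+1) = sin z * sin z^m" by (simp_all add: power_add power2_eq_square)
      show ?thesis by (simp only: pw of_nat_add of_nat_numeral of_nat_1 power2_eq_square) (rule helper[OF cc])
    qed
    ultimately show ?thesis by simp
  qed
  have "((\<lambda>z. real (m+2)^2 * (z * sin z^(m+2)) - real (m+2) * real (m+1) * (z * sin z^m)) has_integral (F (pi/2) - F 0)) {0..pi/2}"
    by (rule fundamental_theorem_of_calculus) (use d in \<open>auto simp: has_real_derivative_iff_has_vector_derivative\<close>)
  moreover have "F (pi/2) - F 0 = 1" by (simp add: F_def)
  ultimately show ?thesis by simp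
qed


lemma alg1: fixes u w c X P :: real assumes "c > 0" "X > 0" "u > 0" "w > 0"
  shows "(1 + (2 * u) * w  *  (c/X  *  P))/(2 * u)^2 = (2 * w * c/u) / (4 * X)  *  (P + X/(u^2  *  (2 * w * c/u)))"
  using assms by (simp add: field_simps power2_eq_square)
lemma alg2: fixes u w v c Y T :: real assumes "c > 0" "Y > 0" "u > 0" "w > 0" "v > 0"
  shows "(1 + v * (2 * u)  *  (Y/(w * c)  *  (1+T)))/v^2 = (4 * Y) / (v  *  (2 * w * c/u))  *  (1 + T + (2 * w * c/u)/((4 * Y) * v))"
  using assms by (simp add: field_simps power2_eq_square)

lemma wp_rec: "real (m+2)^2 * wp (m+2) - real (m+2) * real (m+1) * wp m = 1"
proof -
  have i1: "(\<lambda>z. z * sin z^q) integrable_on {0..pi/2}" for q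
    by (intro integrable_continuous_interval continuous_intros)
  have "integral {0..pi/2} (\<lambda>z. real (m+2)^2 * (z * sin z^(m+2)) - real (m+2) * real (m+1) * (z * sin z^m)) = 1"
    using rec_int[of m] by (rule integral_unique)
  moreover have "integral {0..pi/2} (\<lambda>z. real (m+2)^2 * (z * sin z^(m+2)) - real (m+2) * real (m+1) * (z * sin z^m))
     = real (m+2)^2 * wp (m+2) - real (m+2) * real (m+1) * wp m"
    unfolding wp_def
    by (simp only: integral_diff[OF integrable_on_mult_right[OF i1] integrable_on_mult_right[OF i1]] integral_mult_right)
  ultimately show ?thesis by simp
qed

lemma wp0: "wp 0 = pi^2/8"
proof -
  have "((\<lambda>z. z) has_integral ((pi/2)^2/2 - 0^2/2)) {0..pi/2}"
    by (rule fundamental_theorem_of_calculus) (auto intro!: derivative_eq_intros simp: has_real_derivative_iff_has_vector_derivative[symmetric])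
  then show ?thesis unfolding wp_def by (simp add: integral_unique power2_eq_square)
qed

lemma wp1: "wp 1 = 1"
proof -
  have "((\<lambda>z. z * sin z) has_integral ((sin (pi/2) - pi/2 * cos (pi/2)) - (sin 0 - 0 * cos 0))) {0..pi/2}"
    by (rule fundamental_theorem_of_calculus) (auto intro!: derivative_eq_intros simp: has_real_derivative_iff_has_vector_derivative[symmetric])
  then show ?thesis unfolding wp_def by (simp add: integral_unique)
qed

theorem lemma5p0p2:
  fixes n :: nat
  shows "wp (2*n) = real ((2*n) choose n) / 4 ^ (n+1) *
            (pi^2 / 2 + (\<Sum>k=1..n. 4 ^ k / (real k ^ 2 * real ((2*k) choose k)))) \<and>
         wp (2*n+1) = 4 ^ n / (real (2*n+1) * real ((2*n) choose n)) *
            (1 + (\<Sum>k=1..n. real ((2*k) choose k) / (4 ^ k * real (2*k+1))))"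
proof (induction n)
  case 0
  then show ?case using wp0 wp1 by simp
next
  case (Suc n)
  define c where "c = real ((2*n) choose n)"
  define c' where "c' = real ((2*Suc n) choose Suc n)"
  have cpos: "c > 0" unfolding c_def by simp
  have cc: "c' * (real n+1) = 2*(2*real n+1) * c" unfolding c_def c'_def using cb[of n] by simp
  have c'e: "c' = 2*(2*n+1) * c / (n+1)" using cc by (simp add: field_simps)
  define S where "S = (\<Sum>k=1..n. 4 ^ k / (real k ^ 2 * real ((2*k) choose k)))"
  define T where "T = (\<Sum>k=1..n. real ((2*k) choose k) / (4 ^ k * real (2*k+1)))"
  have S: "(\<Sum>k=1..Suc n. 4 ^ k / (real k ^ 2 * real ((2*k) choose k))) = S + 4^(n+1) / ((n+1)^2 * c')"
    unfolding S_def c'_def by simp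
  have T: "(\<Sum>k=1..Suc n. real ((2*k) choose k) / (4 ^ k * real (2*k+1))) = T + c' / (4^(n+1) * (2*n+3))"
    unfolding T_def c'_def by simp
  have IHe: "wp (2*n) = c / 4^(n+1) * (pi^2/2 + S)" and IHo: "wp (2*n+1) = 4^n / ((2*n+1) * c) * (1 + T)"
    using Suc.IH unfolding c_def S_def T_def by auto
  have r1: "real (2*n+2)^2 * wp (2*n+2) - real (2*n+2) * real (2*n+1) * wp (2*n) = 1"
    using wp_rec[of "2*n"] by (simp add: add.commute)
  have r2: "real (2*n+3)^2 * wp (2*n+3) - real (2*n+3) * real (2*n+2) * wp (2*n+1) = 1"
    proof -
    have q: "2*n+1+2 = 2*n+3" "2*n+1+1 = 2*n+2" by simp_all
    show ?thesis using wp_rec[of "2*n+1"] unfolding q .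
  qed
  define u where "u = real n + 1"
  define w where "w = 2 * real n + 1"
  define v where "v = 2 * real n + 3"
  define X :: real where "X = 4^(n+1)"
  have pos: "u > 0" "w > 0" "v > 0" "X > 0" unfolding u_def w_def v_def X_def by auto
  have c'w: "c' = 2 * w * c / u" unfolding c'e u_def w_def by (simp add: algebra_simps)
  have e1: "wp (2*Suc n) = c' / 4 ^ (Suc n+1) * (pi^2 / 2 + (S + 4^(n+1) / (real (Suc n)^2 * c')))"
  proof -
    have "wp (2*Suc n) = (1 + (2 * u) * w * (c/X * (pi^2/2 + S)))/(2 * u)^2"
      using r1 unfolding IHe u_def w_def X_def by (simp add: field_simps)
    also have "... = (2 * w * c/u) / (4 * X) * ((pi^2/2 + S) + X/(u^2 * (2 * w * c/u)))"
      by (rule alg1) (use pos cpos in auto)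
    finally show ?thesis unfolding c'w X_def u_def by (simp add: algebra_simps)
  qed
  have e2: "wp (2*Suc n+1) = 4 ^ Suc n / (real (2*Suc n+1) * c') * (1 + (T + c' / (4^(n+1) * (2*n+3))))"
  proof -
    have q3: "2*Suc n+1 = 2*n+3" by simp
    have "wp (2*n+3) = (1 + v * (2 * u) * (4^n/(w * c) * (1+T)))/v^2"
      using r2 unfolding IHo u_def w_def v_def by (simp add: field_simps)
    also have "... = (4 * 4^n) / (v * (2 * w * c/u)) * (1 + T + (2 * w * c/u)/((4 * 4^n) * v))"
      by (rule alg2) (use pos cpos in auto)
    finally show ?thesis unfolding c'w v_def q3 by (simp add: algebra_simps)
  qed
  show ?case unfolding S T using e1 e2 by (simp add: c'_def)
qed

end
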